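(* Let $r\ge3$, $n_1,\dots,n_r\ge1$, $p\in \{1,\ldots,\min(n_1,n_2)\}$, $\pi' \in C_2((n_1+n_2-2p)\otimes n_3 \otimes \ldots \otimes n_r)$, $\sigma_1:\{1,\ldots,p\} \to \{1,\ldots,n_1\}$ decreasing and $\sigma_2:\{1,\ldots,p\} \to \{1,\ldots,n_2\}$ injective. Then \[ \mathrm{Cr}(F(\sigma_1,\sigma_2,\pi'))=\alpha_{n_1}(\sigma_1)+\beta(\sigma_2)+\mathrm{Cr}(\pi'). \]
   Context: For a pairing $\pi$ (partition into two-element sets) of a finite set of integers, a crossing is a pair of blocks $\{x_1,y_1\},\{x_2,y_2\}\in\pi$ with $x_1<x_2<y_1<y_2$; $\mathrm{Cr}(\pi)$ is their number. Blocks and respecting pairings: for $n_1,\dots,n_r\ge1$ and $N=n_1+\dots+n_r$, the blocks of $n_1\otimes\cdots\otimes n_r$ are $\{1,\dots,n_1\}$, $\{n_1+1,\dots,n_1+n_2\}$, etc.; $C_2(n_1\otimes\cdots\otimes n_r)$ is the set of pairings of $\{1,\dots,N\}$ each of whose pairs joins two different blocks. For an injective $\sigma:\{1,\dots,p\}\to\{1,\dots,m\}$, $\mathrm{inv}(\sigma)=\mathrm{Card}\{i<j:\sigma(i)>\sigma(j)\}$, $\alpha_n(\sigma):=\sum_{i=1}^p (n+1-\sigma(i))-\frac{p(p+1)}{2}$ and $\beta(\sigma):=\sum_{i=1}^p \sigma(i)-\frac{p(p+1)}{2}+\mathrm{inv}(\sigma)$. Construction $F$: $\pi=F(\sigma_1,\sigma_2,\pi')\in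 C_2(n_1\otimes\cdots\otimes n_r)$ consists of the $p$ pairs $\{\sigma_1(i),n_1+\sigma_2(i)\}$, $1\le i\le p$, together with the pairs obtained from $\pi'$ by identifying the first block $\{1,\dots,n_1+n_2-2p\}$ of $\pi'$ (in increasing order) with the $n_1+n_2-2p$ points of $\{1,\dots,n_1+n_2\}$ not used in those $p$ pairs (in increasing order), and the point $n_1+n_2-2p+j$ of $\pi'$ with $n_1+n_2+j$ for $j\ge1$. *)

theory Defs
  imports Main
begin

definition is_pairing :: "nat set \<Rightarrow> nat set set \<Rightarrow> bool" where
  "is_pairing S \<pi> \<longleftrightarrow> (\<forall>b\<in>\<pi>. card b = 2 \<and> b \<subseteq> S) \<and> (\<forall>x\<in>S. \<exists>!b. b \<in> \<pi> \<and> x \<in> b)"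

definition Cr :: "nat set set \<Rightarrow> nat" where
  "Cr \<pi> = card {(b1, b2). b1 \<in> \<pi> \<and> b2 \<in> \<pi> \<and>
     (\<exists>x1 y1 x2 y2. b1 = {x1, y1} \<and> b2 = {x2, y2} \<and> x1 < x2 \<and> x2 < y1 \<and> y1 < y2)}"

text \<open>Index (0-based) of the block of n_1 (x) ... (x) n_r containing the point k,
  where the block sizes are given by the list ns.\<close>
definition blk :: "nat list \<Rightarrow> nat \<Rightarrow> nat" where
  "blk ns k = card {i. i < length ns \<and> sum_list (take (Suc i) ns) < k}"

definition C2 :: "nat list \<Rightarrow> nat set set set" where
  "C2 ns = {\<pi>. is_pairing {1..sum_list ns} \<pi> \<and>
     (\<forall>b\<in>\<pi>. \<forall>x\<in>b. \<forall>y\<in>b. x \<noteq> y \<longrightarrow> blk ns x \<noteq> blk ns y)}"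

definition inj_map :: "nat \<Rightarrow> nat \<Rightarrow> (nat \<Rightarrow> nat) \<Rightarrow> bool" where
  "inj_map p m \<sigma> \<longleftrightarrow> inj_on \<sigma> {1..p} \<and> \<sigma> ` {1..p} \<subseteq> {1..m}"

definition inv_num :: "nat \<Rightarrow> (nat \<Rightarrow> nat) \<Rightarrow> nat" where
  "inv_num p \<sigma> = card {(i, j). 1 \<le> i \<and> i < j \<and> j \<le> p \<and> \<sigma> i > \<sigma> j}"

definition alpha :: "nat \<Rightarrow> nat \<Rightarrow> (nat \<Rightarrow> nat) \<Rightarrow> int" where
  "alpha n p \<sigma> = (\<Sum>i=1..p. int n + 1 - int (\<sigma> i)) - int (p * (p + 1) div 2)"

definition beta :: "nat \<Rightarrow> (nat \<Rightarrow> nat) \<Rightarrow> int" where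
  "beta p \<sigma> = (\<Sum>i=1..p. int (\<sigma> i)) - int (p * (p + 1) div 2) + int (inv_num p \<sigma>)"

definition unused :: "nat \<Rightarrow> nat \<Rightarrow> nat \<Rightarrow> (nat \<Rightarrow> nat) \<Rightarrow> (nat \<Rightarrow> nat) \<Rightarrow> nat set" where
  "unused n1 n2 p \<sigma>1 \<sigma>2 = {1..n1+n2} - (\<sigma>1 ` {1..p} \<union> (\<lambda>i. n1 + \<sigma>2 i) ` {1..p})"

definition relabel :: "nat \<Rightarrow> nat \<Rightarrow> nat \<Rightarrow> (nat \<Rightarrow> nat) \<Rightarrow> (nat \<Rightarrow> nat) \<Rightarrow> nat \<Rightarrow> nat" where
  "relabel n1 n2 p \<sigma>1 \<sigma>2 k =
     (if k \<le> n1 + n2 - 2 * p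
      then sorted_list_of_set (unused n1 n2 p \<sigma>1 \<sigma>2) ! (k - 1)
      else k + 2 * p)"

definition F :: "nat \<Rightarrow> nat \<Rightarrow> nat \<Rightarrow> (nat \<Rightarrow> nat) \<Rightarrow> (nat \<Rightarrow> nat) \<Rightarrow> nat set set \<Rightarrow> nat set set" where
  "F n1 n2 p \<sigma>1 \<sigma>2 \<pi>' =
     {{\<sigma>1 i, n1 + \<sigma>2 i} | i. i \<in> {1..p}} \<union> (\<lambda>b. relabel n1 n2 p \<sigma>1 \<sigma>2 ` b) ` \<pi>'"

end

theory Submission
  imports Defs
begin


definition crs :: "nat set \<Rightarrow> nat set \<Rightarrow> bool" where
  "crs b1 b2 \<longleftrightarrow> (\<exists>x1 y1 x2 y2. b1={x1,y1} \<and> b2={x2,y2} \<and> x1<x2 \<and> x2<y1 \<and> y1<y2)"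

lemma Cr_alt: "Cr \<pi> = card {(b1,b2). b1\<in>\<pi> \<and> b2\<in>\<pi> \<and> crs b1 b2}"
  unfolding Cr_def crs_def by simp

lemma dbl_eq: "(a::nat)<b \<Longrightarrow> x<y \<Longrightarrow> {a,b}={x,y} \<Longrightarrow> a=x \<and> b=y"
  by (auto simp: doubleton_eq_iff)

lemma crs_iff: assumes "(a::nat)<b" "c<d" shows "crs {a,b} {c,d} \<longleftrightarrow> a<c \<and> c<b \<and> b<d"
proof
  assume "crs {a,b} {c,d}"
  then obtain x1 y1 x2 y2 where h: "{a,b}={x1,y1}" "{c,d}={x2,y2}" "x1<x2" "x2<y1" "y1<y2"
    unfolding crs_def by blast
  have "a=x1 \<and> b=y1" using dbl_eq[OF assms(1) _ h(1)] h by simp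
  moreover have "c=x2 \<and> d=y2" using dbl_eq[OF assms(2) _ h(2)] h by simp
  ultimately show "a<c \<and> c<b \<and> b<d" using h by simp
next
  assume "a<c \<and> c<b \<and> b<d" then show "crs {a,b} {c,d}" unfolding crs_def by blast
qed

lemma two_set: assumes "card b = 2" obtains x y :: nat where "b={x,y}" "x<y"
proof -
  from assms obtain x y where xy: "b={x,y}" "x\<noteq>y" unfolding card_2_iff by blast
  show ?thesis
  proof (cases "x<y")
    case True then show ?thesis using that xy by blast
  next
    case False
    then have "y<x" using xy(2) by simp
    moreover have "b={y,x}" using xy(1) by (simp add: insert_commute)
    ultimately show ?thesis using that by blast
  qed
qed

lemma Cr_union:
  assumes "finite A" "finite B" "A \<inter> B = {}"
  shows "Cr (A \<union> B) = Cr A + Cr B + card {(a,b). a\<in>A \<and> b\<in>B \<and> crs a b}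
           + card {(b,a). b\<in>B \<and> a\<in>A \<and> crs b a}"
proof -
  let ?S = "\<lambda>X Y. {(a,b). a\<in>X \<and> b\<in>Y \<and> crs a b}"
  have fin: "\<And>X Y. finite X \<Longrightarrow> finite Y \<Longrightarrow> finite (?S X Y)"
    by (rule finite_subset[of _ "_ \<times> _"]) auto
  have eq: "?S (A\<union>B) (A\<union>B) = (?S A A \<union> ?S B B) \<union> (?S A B \<union> ?S B A)" by auto
  have "card (?S (A\<union>B) (A\<union>B)) = card (?S A A \<union> ?S B B) + card (?S A B \<union> ?S B A)"
    unfolding eq by (rule card_Un_disjoint) (use assms fin in auto)
  also have "card (?S A A \<union> ?S B B) = card (?S A A) + card (?S B B)"
    by (rule card_Un_disjoint) (use assms fin in auto)
  also have "card (?S A B \<union> ?S B A) = card (?S A B) + card (?S B A)"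
    by (rule card_Un_disjoint) (use assms fin in auto)
  finally show ?thesis unfolding Cr_alt by simp
qed

lemma Cr_image:
  assumes mono: "\<And>x y. x\<in>S \<Longrightarrow> y\<in>S \<Longrightarrow> x<y \<Longrightarrow> g x < (g y::nat)"
    and bl: "\<And>b. b\<in>\<pi> \<Longrightarrow> card b = 2 \<and> b \<subseteq> S"
  shows "Cr ((`) g ` \<pi>) = Cr \<pi>"
proof -
  have inj: "inj_on g S" using mono by (metis inj_onI linorder_neqE_nat order_less_irrefl)
  have mi: "x\<in>S \<Longrightarrow> y\<in>S \<Longrightarrow> g x < g y \<longleftrightarrow> x < y" for x y
    using mono by (metis linorder_neqE_nat order_less_asym)
  have injI: "inj_on ((`) g) \<pi>"
    by (rule inj_onI) (metis bl inj inj_on_image_eq_iff)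
  have key: "crs (g`b1) (g`b2) \<longleftrightarrow> crs b1 b2" if t1: "b1\<in>\<pi>" and t2: "b2\<in>\<pi>" for b1 b2
  proof -
    obtain a b where ab: "b1={a,b}" "a<b" using bl[OF t1] two_set by metis
    obtain c d where cd: "b2={c,d}" "c<d" using bl[OF t2] two_set by metis
    have S: "a\<in>S" "b\<in>S" "c\<in>S" "d\<in>S" using bl t1 t2 ab cd by auto
    have "g a < g b" "g c < g d" using mono S ab cd by auto
    then show ?thesis using ab cd crs_iff S mi by simp
  qed
  let ?h = "map_prod ((`) g) ((`) g)"
  have "{(b1,b2). b1\<in>(`) g ` \<pi> \<and> b2\<in>(`) g ` \<pi> \<and> crs b1 b2}
        = ?h ` {(b1,b2). b1\<in>\<pi> \<and> b2\<in>\<pi> \<and> crs b1 b2}"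
    using key by fastforce
  moreover have "inj_on ?h {(b1,b2). b1\<in>\<pi> \<and> b2\<in>\<pi> \<and> crs b1 b2}"
    using injI unfolding inj_on_def by auto
  ultimately show ?thesis unfolding Cr_alt by (simp add: card_image)
qed

lemma pairs_count:
  assumes "finite S" "inj_on f S"
  shows "2 * card {(i,j). i\<in>S \<and> j\<in>S \<and> (f i::nat) < f j} = card S * card S - card S"
proof -
  let ?X = "{(i,j). i\<in>S \<and> j\<in>S \<and> f i < f j}"
  let ?Y = "{(i,j). i\<in>S \<and> j\<in>S \<and> f j < f i}"
  have fx: "finite ?X" "finite ?Y" by (rule finite_subset[of _ "S \<times> S"], auto simp: assms)+
  have "?Y = prod.swap ` ?X" by auto
  then have cy: "card ?Y = card ?X" by (simp add: card_image)
  have "?X \<union> ?Y = S \<times> S - Id_on S" using assms(2) unfolding inj_on_def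
    by (auto dest: linorder_neqE_nat)
  moreover have "card (S \<times> S - Id_on S) = card S * card S - card S"
  proof -
    have "Id_on S \<subseteq> S \<times> S" by auto
    moreover have "card (Id_on S) = card S"
    proof -
      have "Id_on S = (\<lambda>x. (x,x)) ` S" by auto
      then show ?thesis by (simp add: card_image inj_on_def)
    qed
    ultimately show ?thesis using assms(1) by (simp add: card_Diff_subset card_cartesian_product finite_subset)
  qed
  moreover have "card (?X \<union> ?Y) = card ?X + card ?Y"
    by (rule card_Un_disjoint) (use fx in auto)
  ultimately show ?thesis using cy by simp
qed

lemma sum_card_pairs:
  assumes "finite S"
  shows "(\<Sum>i\<in>S. card {j\<in>S. R i j}) = card {(i,j). i\<in>S \<and> j\<in>S \<and> R i j}"
proof -
  have "{(i,j). i\<in>S \<and> j\<in>S \<and> R i j} = Sigma S (\<lambda>i. {j\<in>S. R i j})" by auto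
  then show ?thesis using assms by (simp add: card_SigmaI)
qed



lemma pairs_count2:
  assumes "finite S" "inj_on f S"
  shows "2 * card {(i,j). i\<in>S \<and> j\<in>S \<and> (f j::nat) < f i} = card S * card S - card S"
proof -
  have "{(i,j). i\<in>S \<and> j\<in>S \<and> f j < f i} = prod.swap ` {(i,j). i\<in>S \<and> j\<in>S \<and> f i < f j}" by auto
  then show ?thesis using pairs_count[OF assms] by (simp add: card_image)
qed

theorem lemma2p6:
  fixes ns :: "nat list" and p :: nat and \<sigma>1 \<sigma>2 :: "nat \<Rightarrow> nat" and \<pi>' :: "nat set set"
  assumes "length ns \<ge> 3"
    and "\<forall>n\<in>set ns. n \<ge> 1"
    and "1 \<le> p" and "p \<le> min (ns ! 0) (ns ! 1)"
    and "\<pi>' \<in> C2 ((ns ! 0 + ns ! 1 - 2 * p) # drop 2 ns)"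
    and "inj_map p (ns ! 0) \<sigma>1"
    and "\<forall>i j. 1 \<le> i \<and> i < j \<and> j \<le> p \<longrightarrow> \<sigma>1 j < \<sigma>1 i"
    and "inj_map p (ns ! 1) \<sigma>2"
  shows "int (Cr (F (ns ! 0) (ns ! 1) p \<sigma>1 \<sigma>2 \<pi>'))
           = alpha (ns ! 0) p \<sigma>1 + beta p \<sigma>2 + int (Cr \<pi>')"
proof -
  define n1 where "n1 = ns!0"
  define n2 where "n2 = ns!1"
  define m where "m = n1+n2-2*p"
  define L where "L = m # drop 2 ns"
  define M where "M = sum_list L"
  define g where "g = relabel n1 n2 p \<sigma>1 \<sigma>2"
  define U where "U = unused n1 n2 p \<sigma>1 \<sigma>2"
  define P where "P = (\<lambda>i. {\<sigma>1 i, n1 + \<sigma>2 i})"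
  define A where "A = P ` {1..p}"
  define B where "B = (\<lambda>b. g ` b) ` \<pi>'"
  define X1 where "X1 = \<sigma>1 ` {1..p}"
  define X2 where "X2 = (\<lambda>i. n1 + \<sigma>2 i) ` {1..p}"
  have FAB: "F n1 n2 p \<sigma>1 \<sigma>2 \<pi>' = A \<union> B"
    unfolding F_def A_def B_def P_def g_def by auto
  have pn: "p \<le> n1" "p \<le> n2" using assms(4) unfolding n1_def n2_def by auto
  have m2p: "m + 2*p = n1+n2" using pn unfolding m_def by simp
  have s1: "\<And>i. i\<in>{1..p} \<Longrightarrow> 1 \<le> \<sigma>1 i \<and> \<sigma>1 i \<le> n1" and inj1: "inj_on \<sigma>1 {1..p}"
    using assms(6) unfolding inj_map_def n1_def by (auto simp: image_subset_iff)
  have s2: "\<And>i. i\<in>{1..p} \<Longrightarrow> 1 \<le> \<sigma>2 i \<and> \<sigma>2 i \<le> n2" and inj2: "inj_on \<sigma>2 {1..p}"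
    using assms(8) unfolding inj_map_def n2_def by (auto simp: image_subset_iff)
  have dec: "\<And>i j. 1\<le>i \<Longrightarrow> i<j \<Longrightarrow> j\<le>p \<Longrightarrow> \<sigma>1 j < \<sigma>1 i" using assms(7) by blast
  have inj2': "inj_on (\<lambda>i. n1 + \<sigma>2 i) {1..p}" by (rule inj_onI) (use inj2 in \<open>auto dest: inj_onD\<close>)
  have U_eq: "U = {1..n1+n2} - (X1 \<union> X2)" unfolding U_def unused_def X1_def X2_def by simp
  have cX1: "card X1 = p" unfolding X1_def using inj1 by (simp add: card_image)
  have cX2: "card X2 = p" unfolding X2_def using inj2' by (simp add: card_image)
  have dX: "X1 \<inter> X2 = {}" unfolding X1_def X2_def using s1 s2 by fastforce
  have sX: "X1 \<union> X2 \<subseteq> {1..n1+n2}" unfolding X1_def X2_def using s1 s2 by fastforce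
  have cX: "card (X1 \<union> X2) = 2*p" using cX1 cX2 dX
    by (simp add: card_Un_disjoint X1_def X2_def)
  have fX: "finite (X1 \<union> X2)" using sX finite_subset by blast
  have cardU: "card U = m" unfolding U_eq m_def
    using card_Diff_subset[OF fX sX] cX by simp
  have finU: "finite U" unfolding U_eq by simp
  have Usub: "U \<subseteq> {1..n1+n2}" unfolding U_eq by auto
  define xs where "xs = sorted_list_of_set U"
  have xs: "length xs = m" "set xs = U" "sorted_wrt (<) xs"
    unfolding xs_def using cardU finU by auto
  have g_lo: "\<And>k. k\<le>m \<Longrightarrow> g k = xs!(k-1)"
    unfolding g_def relabel_def xs_def U_def m_def by simp
  have g_hi: "\<And>k. m<k \<Longrightarrow> g k = k+2*p"
    unfolding g_def relabel_def m_def by simp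
  have gU: "g k \<in> U" if k: "1\<le>k" "k\<le>m" for k
  proof -
    have "k-1 < length xs" using xs(1) k by simp
    then have "xs!(k-1) \<in> set xs" by (rule nth_mem)
    then show ?thesis using g_lo[OF k(2)] xs(2) by simp
  qed
  have gmono: "g x < g y" if "1\<le>x" "x<y" for x y
  proof (cases "y \<le> m")
    case True
    have "x-1 < y-1" "y-1 < length xs" using that True xs(1) by simp_all
    then have "xs!(x-1) < xs!(y-1)" using sorted_wrt_nth_less[OF xs(3)] by blast
    then show ?thesis using g_lo True that by simp
  next
    case False
    show ?thesis
    proof (cases "x \<le> m")
      case True
      then have "g x \<in> U" using gU that by simp
      then show ?thesis using Usub False g_hi m2p by fastforce
    next
      case False
      then show ?thesis using g_hi that by simp
    qed
  qed
  have ginj: "x = y" if "1\<le>x" "1\<le>y" "g x = g y" for x y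
  proof (rule ccontr)
    assume "x \<noteq> y"
    then have "x<y \<or> y<x" by arith
    then show False using gmono[of x y] gmono[of y x] that by auto
  qed
  have gsurj: "\<exists>k. 1\<le>k \<and> k\<le>m \<and> g k = u" if "u\<in>U" for u
  proof -
    have "u \<in> set xs" using that xs(2) by simp
    then obtain t where t: "t < length xs" "xs!t = u" by (auto simp: in_set_conv_nth)
    then have "t < m" "xs!t = u" using xs(1) by auto
    then show ?thesis using g_lo[of "Suc t"] by (intro exI[of _ "Suc t"]) simp
  qed
  have C2': "is_pairing {1..M} \<pi>'" and blkc: "\<And>b x y. b\<in>\<pi>' \<Longrightarrow> x\<in>b \<Longrightarrow> y\<in>b \<Longrightarrow> x\<noteq>y \<Longrightarrow> blk L x \<noteq> blk L y"
    using assms(5) unfolding C2_def M_def L_def m_def n1_def n2_def by auto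
  have blk0: "blk L k = 0" if "k \<le> m" for k
  proof -
    have "{i. i < length L \<and> sum_list (take (Suc i) L) < k} = {}"
      unfolding L_def using that by auto
    then show ?thesis unfolding blk_def by simp
  qed
  have bl': "\<exists>x y. b={x,y} \<and> x<y \<and> 1\<le>x \<and> y\<le>M \<and> m<y" if "b\<in>\<pi>'" for b
  proof -
    have "card b = 2" "b \<subseteq> {1..M}" using C2' that unfolding is_pairing_def by auto
    then obtain x y where xy: "b={x,y}" "x<y" using two_set by metis
    have "m < y"
    proof (rule ccontr)
      assume "\<not> m < y"
      then have "blk L x = blk L y" using blk0 xy by simp
      then show False using blkc[OF that, of x y] xy by auto
    qed
    then show ?thesis using xy \<open>b \<subseteq> {1..M}\<close> by auto
  qed
  have uniq: "b=b'" if h: "b\<in>\<pi>'" "b'\<in>\<pi>'" "x\<in>b" "x\<in>b'" for b b' x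
  proof -
    have "x \<in> {1..M}" using C2' h unfolding is_pairing_def by blast
    then have "\<exists>!c. c\<in>\<pi>' \<and> x\<in>c" using C2' unfolding is_pairing_def by blast
    then show ?thesis using h by blast
  qed
  have cover: "\<exists>b\<in>\<pi>'. k\<in>b" if "1\<le>k" "k\<le>M" for k
  proof -
    have "k \<in> {1..M}" using that by simp
    then have "\<exists>!c. c\<in>\<pi>' \<and> k\<in>c" using C2' unfolding is_pairing_def by blast
    then show ?thesis by blast
  qed
  have finpi: "finite \<pi>'"
    by (rule finite_subset[of _ "Pow {1..M}"]) (use C2' in \<open>auto simp: is_pairing_def\<close>)
  have mM: "m \<le> M" unfolding M_def L_def by simp

  have Bform: "\<exists>b' x y. b'\<in>\<pi>' \<and> b = g ` b' \<and> b'={x,y} \<and> x<y \<and> 1\<le>x \<and> y\<le>M \<and> m<y \<and> b={g x, g y} \<and> g x < g y \<and> g y = y+2*p" if bB: "b\<in>B" for b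
  proof -
    obtain b' where b': "b'\<in>\<pi>'" "b = g ` b'" using bB unfolding B_def by blast
    obtain x y where xy: "b'={x,y}" "x<y" "1\<le>x" "y\<le>M" "m<y" using bl'[OF b'(1)] by blast
    have 1: "g x < g y" using gmono xy by simp
    have 2: "g y = y+2*p" using g_hi xy by simp
    have 3: "b = {g x, g y}" using b' xy by simp
    show ?thesis using b' xy 1 2 3 by (intro exI[of _ b'] exI[of _ x] exI[of _ y] conjI) assumption+
  qed
  have Plt: "\<sigma>1 i < n1 + \<sigma>2 i" if "i\<in>{1..p}" for i
  proof -
    have "\<sigma>1 i \<le> n1" "1 \<le> \<sigma>2 i" using s1 s2 that by auto
    then show ?thesis by simp
  qed
  have Pinj: "inj_on P {1..p}"
  proof (rule inj_onI)
    fix i j assume ij: "i\<in>{1..p}" "j\<in>{1..p}" "P i = P j"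
    have "{\<sigma>1 i, n1+\<sigma>2 i} = {\<sigma>1 j, n1+\<sigma>2 j}" using ij(3) by (simp add: P_def)
    then have "\<sigma>1 i = \<sigma>1 j" using dbl_eq[OF Plt[OF ij(1)] Plt[OF ij(2)]] by simp
    then show "i = j" using inj_onD[OF inj1 _ ij(1) ij(2)] by simp
  qed
  have crsP: "crs (P i) {c,d} \<longleftrightarrow> \<sigma>1 i < c \<and> c < n1+\<sigma>2 i \<and> n1+\<sigma>2 i < d" if "i\<in>{1..p}" "c<d" for i c d
    unfolding P_def using crs_iff[OF Plt[OF that(1)] that(2)] .
  have finA: "finite A" unfolding A_def by simp
  have finB: "finite B" unfolding B_def using finpi by simp
  have disj: "A \<inter> B = {}"
  proof -
    { fix b assume bA: "b\<in>A" and bB: "b\<in>B"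
      then obtain i where i: "i\<in>{1..p}" "b = P i" unfolding A_def by auto
      obtain x y where xy: "b={g x, g y}" "g y = y+2*p" "m<y" using Bform[OF bB] by blast
      then have "y+2*p \<in> P i" using i by auto
      then have "y+2*p = \<sigma>1 i \<or> y+2*p = n1+\<sigma>2 i" by (simp add: P_def)
      moreover have "\<sigma>1 i \<le> n1" "\<sigma>2 i \<le> n2" using s1 s2 i by auto
      ultimately have False using m2p xy(3) by linarith }
    then show ?thesis by blast
  qed
  have crA: "Cr A = inv_num p \<sigma>2"
  proof -
    define Inv where "Inv = {(i, j). 1 \<le> i \<and> i < j \<and> j \<le> p \<and> \<sigma>2 i > \<sigma>2 j}"
    have "{(a,b). a\<in>A \<and> b\<in>A \<and> crs a b} = (\<lambda>(i,j). (P j, P i)) ` Inv"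
    proof (rule set_eqI, rule iffI)
      fix z assume "z \<in> {(a,b). a\<in>A \<and> b\<in>A \<and> crs a b}"
      then obtain a b where ab: "z=(a,b)" "a\<in>A" "b\<in>A" "crs a b" by blast
      then obtain u v where uv: "u\<in>{1..p}" "v\<in>{1..p}" "a = P u" "b = P v"
        unfolding A_def by blast
      have Pv: "P v = {\<sigma>1 v, n1+\<sigma>2 v}" unfolding P_def by simp
      have "crs (P u) {\<sigma>1 v, n1+\<sigma>2 v}" using ab(4) uv Pv by simp
      then have c: "\<sigma>1 u < \<sigma>1 v" "n1+\<sigma>2 u < n1+\<sigma>2 v" using crsP[OF uv(1) Plt[OF uv(2)]] by auto
      have "\<not> u < v"
      proof
        assume "u < v"
        then have "\<sigma>1 v < \<sigma>1 u" using dec[of u v] uv(1,2) by simp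
        then show False using c(1) by simp
      qed
      moreover have "u \<noteq> v" using c(1) by auto
      ultimately have "v < u" by simp
      then have vu: "(v,u) \<in> Inv" using c uv(1,2) unfolding Inv_def by simp
      have "z = (\<lambda>(i,j). (P j, P i)) (v,u)" using ab(1) uv(3,4) by simp
      then show "z \<in> (\<lambda>(i,j). (P j, P i)) ` Inv" using vu by (rule image_eqI)
    next
      fix z assume "z \<in> (\<lambda>(i,j). (P j, P i)) ` Inv"
      then obtain i j where ij: "(i,j)\<in>Inv" "z = (P j, P i)" by auto
      then have r: "1\<le>i" "i<j" "j\<le>p" "\<sigma>2 j < \<sigma>2 i" unfolding Inv_def by auto
      have ip: "i\<in>{1..p}" "j\<in>{1..p}" using r by auto
      have "\<sigma>1 j < \<sigma>1 i" using dec[of i j] r by simp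
      moreover have "\<sigma>1 i \<le> n1" "1 \<le> \<sigma>2 j" using s1 s2 ip by auto
      ultimately have "crs (P j) {\<sigma>1 i, n1 + \<sigma>2 i}" using crsP[OF ip(2) Plt[OF ip(1)]] r by simp
      moreover have "P i = {\<sigma>1 i, n1 + \<sigma>2 i}" unfolding P_def by simp
      ultimately have "crs (P j) (P i)" by simp
      moreover have "P j \<in> A" "P i \<in> A" using ip unfolding A_def by auto
      ultimately show "z \<in> {(a,b). a\<in>A \<and> b\<in>A \<and> crs a b}" using ij(2) by simp
    qed
    moreover have "inj_on (\<lambda>(i,j). (P j, P i)) Inv"
    proof (rule inj_onI)
      fix x y assume h: "x\<in>Inv" "y\<in>Inv" "(\<lambda>(i,j). (P j, P i)) x = (\<lambda>(i,j). (P j, P i)) y"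
      obtain i j i' j' where xy: "x=(i,j)" "y=(i',j')" by (cases x, cases y) auto
      have r: "i\<in>{1..p}" "j\<in>{1..p}" "i'\<in>{1..p}" "j'\<in>{1..p}" using h(1,2) xy unfolding Inv_def by auto
      have "P j = P j'" "P i = P i'" using h(3) xy by auto
      then have "j = j'" "i = i'" using inj_onD[OF Pinj] r by auto
      then show "x = y" using xy by simp
    qed
    ultimately show ?thesis unfolding Cr_alt inv_num_def Inv_def[symmetric] by (simp add: card_image)
  qed
  have crB: "Cr B = Cr \<pi>'" unfolding B_def
  proof (rule Cr_image[where S="{k. 1\<le>k}"])
    fix x y :: nat assume "x \<in> {k. 1\<le>k}" "y \<in> {k. 1\<le>k}" "x<y"
    then show "g x < g y" using gmono by simp
  next
    fix b assume "b\<in>\<pi>'"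
    then have "card b = 2 \<and> b \<subseteq> {1..M}" using C2' unfolding is_pairing_def by blast
    then show "card b = 2 \<and> b \<subseteq> {k. 1\<le>k}" by auto
  qed
  have BA: "{(b,a). b\<in>B \<and> a\<in>A \<and> crs b a} = {}"
  proof -
    { fix b a assume h: "b\<in>B" "a\<in>A" "crs b a"
      obtain x y where bx: "b={g x, g y}" "g x < g y" "g y = y+2*p" "m<y" using Bform[OF h(1)] by blast
      obtain i where i: "i\<in>{1..p}" "a = P i" using h(2) unfolding A_def by auto
      have a: "a = {\<sigma>1 i, n1+\<sigma>2 i}" using i P_def by simp
      have "g y < n1 + \<sigma>2 i" using h(3) crs_iff[OF bx(2) Plt[OF i(1)]] bx(1) a by simp
      then have False using bx s2 i m2p by fastforce }
    then show ?thesis by blast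
  qed
  have cntB: "card {b\<in>B. crs (P i) b} = card (U \<inter> {\<sigma>1 i<..<n1+\<sigma>2 i})" if i: "i\<in>{1..p}" for i
  proof -
    have injMin: "inj_on Min B"
    proof (rule inj_onI)
      fix b1 b2 assume h: "b1\<in>B" "b2\<in>B" "Min b1 = Min b2"
      obtain b1' x1 y1 where e1: "b1'\<in>\<pi>'" "b1 = g`b1'" "b1'={x1,y1}" "x1<y1" "1\<le>x1" "b1={g x1, g y1}" "g x1 < g y1"
        using Bform[OF h(1)] by blast
      obtain b2' x2 y2 where e2: "b2'\<in>\<pi>'" "b2 = g`b2'" "b2'={x2,y2}" "x2<y2" "1\<le>x2" "b2={g x2, g y2}" "g x2 < g y2"
        using Bform[OF h(2)] by blast
      have "g x1 = g x2" using h(3) e1 e2 by (simp add: min_def)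
      then have "x1 = x2" using ginj e1 e2 by blast
      then have "b1' = b2'" using uniq e1 e2 by blast
      then show "b1 = b2" using e1 e2 by simp
    qed
    have "Min ` {b\<in>B. crs (P i) b} = U \<inter> {\<sigma>1 i<..<n1+\<sigma>2 i}"
    proof (rule set_eqI, rule iffI)
      fix u assume "u \<in> Min ` {b\<in>B. crs (P i) b}"
      then obtain b where b: "b\<in>B" "crs (P i) b" "u = Min b" by auto
      obtain x y where e: "x<y" "1\<le>x" "b={g x, g y}" "g x < g y"
        using Bform[OF b(1)] by blast
      have u: "u = g x" using b e by (simp add: min_def)
      have c: "\<sigma>1 i < g x" "g x < n1+\<sigma>2 i" using b(2) crsP[OF i e(4)] e by auto
      have "x \<le> m"
      proof (rule ccontr)
        assume nx: "\<not> x \<le> m" then have "g x = x+2*p" using g_hi by simp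
        then show False using c s2 i m2p nx by fastforce
      qed
      then have "g x \<in> U" using gU e by simp
      then show "u \<in> U \<inter> {\<sigma>1 i<..<n1+\<sigma>2 i}" using u c by simp
    next
      fix u assume u: "u \<in> U \<inter> {\<sigma>1 i<..<n1+\<sigma>2 i}"
      then obtain k where k: "1\<le>k" "k\<le>m" "g k = u" using gsurj by blast
      obtain b' where b': "b'\<in>\<pi>'" "k\<in>b'" using cover k mM by fastforce
      obtain x y where xy: "b'={x,y}" "x<y" "1\<le>x" "y\<le>M" "m<y" using bl'[OF b'(1)] by blast
      have xk: "x = k" using xy b'(2) k by auto
      have gy: "g y = y+2*p" using g_hi xy by simp
      have lt: "g x < g y" using gmono xy by simp
      have bB: "g`b' \<in> B" unfolding B_def using b' by simp
      have "\<sigma>2 i \<le> n2" using s2 i by auto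
      then have "n1 + \<sigma>2 i < g y" using gy xy(5) m2p by linarith
      then have "crs (P i) {g x, g y}" using crsP[OF i lt] u xk k by simp
      then have mem: "g`b' \<in> {b\<in>B. crs (P i) b}" using bB xy by simp
      have "Min (g`b') = u" using xy lt xk k by (simp add: min_def)
      then show "u \<in> Min ` {b\<in>B. crs (P i) b}" using mem by (metis image_eqI)
    qed
    moreover have "card (Min ` {b\<in>B. crs (P i) b}) = card {b\<in>B. crs (P i) b}"
      by (rule card_image, rule inj_on_subset[OF injMin]) auto
    ultimately show ?thesis by simp
  qed
  have AB: "card {(a,b). a\<in>A \<and> b\<in>B \<and> crs a b} = (\<Sum>i\<in>{1..p}. card (U \<inter> {\<sigma>1 i<..<n1+\<sigma>2 i}))"
  proof -
    have "{(a,b). a\<in>A \<and> b\<in>B \<and> crs a b} = (\<lambda>(i,b). (P i, b)) ` Sigma {1..p} (\<lambda>i. {b\<in>B. crs (P i) b})"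
      unfolding A_def by auto
    moreover have "inj_on (\<lambda>(i,b). (P i, b)) (Sigma {1..p} (\<lambda>i. {b\<in>B. crs (P i) b}))"
    proof (rule inj_onI)
      fix x y assume h: "x\<in>Sigma {1..p} (\<lambda>i. {b\<in>B. crs (P i) b})" "y\<in>Sigma {1..p} (\<lambda>i. {b\<in>B. crs (P i) b})"
        "(\<lambda>(i,b). (P i, b)) x = (\<lambda>(i,b). (P i, b)) y"
      obtain i b i' b' where xy: "x=(i,b)" "y=(i',b')" by (cases x, cases y) auto
      have r: "i\<in>{1..p}" "i'\<in>{1..p}" using h(1,2) xy by auto
      have "P i = P i'" "b = b'" using h(3) xy by auto
      then show "x = y" using inj_onD[OF Pinj _ r] xy by simp
    qed
    ultimately have "card {(a,b). a\<in>A \<and> b\<in>B \<and> crs a b} = card (Sigma {1..p} (\<lambda>i. {b\<in>B. crs (P i) b}))"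
      by (simp add: card_image)
    also have "\<dots> = (\<Sum>i\<in>{1..p}. card {b\<in>B. crs (P i) b})"
      using finB by (simp add: card_SigmaI)
    also have "\<dots> = (\<Sum>i\<in>{1..p}. card (U \<inter> {\<sigma>1 i<..<n1+\<sigma>2 i}))"
      by (rule sum.cong) (simp_all add: cntB)
    finally show ?thesis .
  qed
  have cnt: "int (card (U \<inter> {\<sigma>1 i<..<n1+\<sigma>2 i})) = int n1 + int (\<sigma>2 i) - int (\<sigma>1 i) - 1
       - int (card {j\<in>{1..p}. \<sigma>1 i < \<sigma>1 j}) - int (card {j\<in>{1..p}. \<sigma>2 j < \<sigma>2 i})"
    if i: "i\<in>{1..p}" for i
  proof -
    define I where "I = {\<sigma>1 i<..<n1+\<sigma>2 i}"
    define Y1 where "Y1 = \<sigma>1 ` {j\<in>{1..p}. \<sigma>1 i < \<sigma>1 j}"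
    define Y2 where "Y2 = (\<lambda>j. n1 + \<sigma>2 j) ` {j\<in>{1..p}. \<sigma>2 j < \<sigma>2 i}"
    have "\<sigma>2 i \<le> n2" using s2 i by auto
    then have Isub: "I \<subseteq> {1..n1+n2}" unfolding I_def by auto
    have XY1: "X1 \<inter> I = Y1" unfolding X1_def Y1_def I_def using s1 s2 i by fastforce
    have XY2: "X2 \<inter> I = Y2" unfolding X2_def Y2_def I_def using s1 s2 i by fastforce
    have e: "U \<inter> I = I - (Y1 \<union> Y2)" unfolding U_eq using Isub XY1 XY2 by blast
    have Ysub: "Y1 \<union> Y2 \<subseteq> I" using XY1 XY2 by blast
    have cY1: "card Y1 = card {j\<in>{1..p}. \<sigma>1 i < \<sigma>1 j}"
      unfolding Y1_def by (rule card_image, rule inj_on_subset[OF inj1]) auto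
    have cY2: "card Y2 = card {j\<in>{1..p}. \<sigma>2 j < \<sigma>2 i}"
      unfolding Y2_def by (rule card_image, rule inj_on_subset[OF inj2']) auto
    have dY: "Y1 \<inter> Y2 = {}" using dX XY1 XY2 by blast
    have fY: "finite Y1" "finite Y2" unfolding Y1_def Y2_def by auto
    have cI: "card I = n1 + \<sigma>2 i - Suc (\<sigma>1 i)" unfolding I_def by simp
    have "card (U \<inter> I) = card I - card (Y1 \<union> Y2)" unfolding e
      using Ysub fY by (simp add: card_Diff_subset)
    moreover have "card (Y1 \<union> Y2) = card Y1 + card Y2" using dY fY by (simp add: card_Un_disjoint)
    moreover have "card Y1 + card Y2 \<le> card I" using Ysub card_mono[OF _ Ysub] \<open>card (Y1 \<union> Y2) = card Y1 + card Y2\<close>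
      unfolding I_def by simp
    moreover have "Suc (\<sigma>1 i) \<le> n1 + \<sigma>2 i" using Plt[OF i] by simp
    ultimately show ?thesis using cY1 cY2 cI unfolding I_def by simp
  qed
  define D1 where "D1 = (\<Sum>i\<in>{1..p}. card {j\<in>{1..p}. \<sigma>1 i < \<sigma>1 j})"
  define D2 where "D2 = (\<Sum>i\<in>{1..p}. card {j\<in>{1..p}. \<sigma>2 j < \<sigma>2 i})"
  have sum1: "2 * D1 = p*p - p"
    unfolding D1_def using pairs_count[OF _ inj1] sum_card_pairs[of "{1..p}" "\<lambda>i j. \<sigma>1 i < \<sigma>1 j"] by simp
  have sum2: "2 * D2 = p*p - p"
    unfolding D2_def using pairs_count2[OF _ inj2] sum_card_pairs[of "{1..p}" "\<lambda>i j. \<sigma>2 j < \<sigma>2 i"] by simp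
  have pp: "p \<le> p*p" by simp
  have iD1: "2 * int D1 = int p * int p - int p" using sum1 pp
    by (metis of_nat_diff of_nat_mult of_nat_numeral)
  have iD2: "2 * int D2 = int p * int p - int p" using sum2 pp
    by (metis of_nat_diff of_nat_mult of_nat_numeral)
  have T: "2 * int (p*(p+1) div 2) = int p * (int p + 1)"
  proof -
    have "2 dvd p*(p+1)" by simp
    then have "2 * (p*(p+1) div 2) = p*(p+1)" by simp
    then show ?thesis by (metis of_nat_1 of_nat_add of_nat_mult of_nat_numeral)
  qed
  have S: "int (\<Sum>i\<in>{1..p}. card (U \<inter> {\<sigma>1 i<..<n1+\<sigma>2 i}))
     = (\<Sum>i\<in>{1..p}. int n1 + int (\<sigma>2 i) - int (\<sigma>1 i) - 1
       - int (card {j\<in>{1..p}. \<sigma>1 i < \<sigma>1 j}) - int (card {j\<in>{1..p}. \<sigma>2 j < \<sigma>2 i}))"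
    unfolding of_nat_sum by (rule sum.cong) (simp_all add: cnt)
  also have "\<dots> = int p * int n1 + (\<Sum>i\<in>{1..p}. int (\<sigma>2 i)) - (\<Sum>i\<in>{1..p}. int (\<sigma>1 i)) - int p
       - int D1 - int D2"
    unfolding D1_def D2_def by (simp add: sum_subtractf sum.distrib of_nat_sum)
  finally have S': "int (\<Sum>i\<in>{1..p}. card (U \<inter> {\<sigma>1 i<..<n1+\<sigma>2 i})) = int p * int n1 + (\<Sum>i\<in>{1..p}. int (\<sigma>2 i)) - (\<Sum>i\<in>{1..p}. int (\<sigma>1 i)) - int p
       - int D1 - int D2" .
  have al: "alpha n1 p \<sigma>1 = int p * int n1 + int p - (\<Sum>i\<in>{1..p}. int (\<sigma>1 i)) - int (p*(p+1) div 2)"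
    unfolding alpha_def by (simp add: sum_subtractf sum.distrib distrib_left)
  have be: "beta p \<sigma>2 = (\<Sum>i\<in>{1..p}. int (\<sigma>2 i)) - int (p*(p+1) div 2) + int (inv_num p \<sigma>2)"
    unfolding beta_def by simp
  have main: "Cr (F n1 n2 p \<sigma>1 \<sigma>2 \<pi>') = inv_num p \<sigma>2 + Cr \<pi>' + (\<Sum>i\<in>{1..p}. card (U \<inter> {\<sigma>1 i<..<n1+\<sigma>2 i}))"
    unfolding FAB using Cr_union[OF finA finB disj] crA crB AB BA by simp
  have "int (Cr (F n1 n2 p \<sigma>1 \<sigma>2 \<pi>')) = alpha n1 p \<sigma>1 + beta p \<sigma>2 + int (Cr \<pi>')"
    unfolding main al be using S' iD1 iD2 T by (simp add: algebra_simps)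
  then show ?thesis unfolding n1_def n2_def .
qed
end
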